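(* Let $N\ge 2$ be an integer and let $\Delta_N=\{p=(p_1,\dots,p_N)\in[0,1]^N:\ \sum_{i=1}^N p_i=1\}$. For $p\in\Delta_N$ define the normalized Shannon entropy $$H(p)=\frac{1}{\log N}\Big(-\sum_{i=1}^N p_i\log p_i\Big)\quad(\text{with }0\log 0=0),$$ the total variation distance to the uniform distribution $TV(p,q)=\frac12\sum_{i=1}^N\big|p_i-\frac1N\big|$ with $q=(1/N,\dots,1/N)$, and the statistical complexity $$C_{TV}(p)=H(p)\,TV(p,q)^2=-\frac{1}{4\log N}\Big(\sum_{i=1}^N p_i\log p_i\Big)\Big(\sum_{i=1}^N\Big|p_i-\frac1N\Big|\Big)^2.$$ Then the maximum of $C_{TV}$ over $\Delta_N$ is achieved on a distribution which, up to a permutation of the coordinates, belongs to the family $$p_i=\frac{1-p_{\max}}{K}\ \ (i=1,\dots,K),\qquad p_i=\frac{p_{\max}}{N-K}\ \ (i=K+1,\dots,N),$$ for some integer $K\in\{1,\dots,N-1\}$ and some constant $p_{\max}\in[0,1]$. *)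

theory Defs
  imports Complex_Main "HOL-Combinatorics.Permutations"
begin

definition simplex :: "nat \<Rightarrow> (nat \<Rightarrow> real) set" where
  "simplex N = {p. (\<forall>i\<in>{1..N}. 0 \<le> p i \<and> p i \<le> 1) \<and> (\<Sum>i=1..N. p i) = 1}"

definition xlogx :: "real \<Rightarrow> real" where
  "xlogx x = (if x = 0 then 0 else x * ln x)"

definition norm_entropy :: "nat \<Rightarrow> (nat \<Rightarrow> real) \<Rightarrow> real" where
  "norm_entropy N p = (1 / ln (real N)) * (- (\<Sum>i=1..N. xlogx (p i)))"

definition tv_uniform :: "nat \<Rightarrow> (nat \<Rightarrow> real) \<Rightarrow> real" where
  "tv_uniform N p = (1/2) * (\<Sum>i=1..N. \<bar>p i - 1 / real N\<bar>)"

definition C_TV :: "nat \<Rightarrow> (nat \<Rightarrow> real) \<Rightarrow> real" where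
  "C_TV N p = norm_entropy N p * (tv_uniform N p)^2"

end

theory Submission
  imports Defs
begin

lemma xlogx_lim: "(xlogx \<longlongrightarrow> 0) (at_right 0)"
proof (rule tendsto_sandwich[where f="\<lambda>x. - 2 * sqrt x" and h="\<lambda>x. 0"])
  have ev: "eventually (\<lambda>x::real. 0 < x \<and> x < 1) (at_right 0)"
  proof -
    have "eventually (\<lambda>x::real. x < 1) (at_right 0)"
      using order_tendstoD(2)[OF tendsto_ident_at[of "0::real" "{0<..}"] zero_less_one] .
    from eventually_conj[OF eventually_at_right_less this] show ?thesis .
  qed
  show "eventually (\<lambda>x. - 2 * sqrt x \<le> xlogx x) (at_right 0)"
    using ev
  proof (rule eventually_mono)
    fix x :: real assume x: "0 < x \<and> x < 1"
    have s: "sqrt x > 0" using x by simp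
    have "ln (1 / sqrt x) \<le> 1 / sqrt x - 1" using s by (intro ln_le_minus_one) simp
    hence "ln (sqrt x) \<ge> 1 - 1 / sqrt x" using s by (simp add: ln_div)
    moreover have "ln x = 2 * ln (sqrt x)"
      using x by (simp add: ln_sqrt)
    ultimately have "ln x \<ge> 2 - 2 / sqrt x" by simp
    moreover have "2 / sqrt x > 0" using s by simp
    ultimately have "ln x \<ge> - 2 / sqrt x" by simp
    hence "x * ln x \<ge> x * (- 2 / sqrt x)" using x by (intro mult_left_mono) auto
    moreover have "x * (- 2 / sqrt x) = - 2 * sqrt x"
      using x s by (simp add: field_simps)
    ultimately show "- 2 * sqrt x \<le> xlogx x" using x by (simp add: xlogx_def)
  qed
  show "eventually (\<lambda>x. xlogx x \<le> 0) (at_right 0)"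
    using ev
  proof (rule eventually_mono)
    fix x :: real assume x: "0 < x \<and> x < 1"
    then show "xlogx x \<le> 0" by (simp add: xlogx_def mult_nonneg_nonpos)
  qed
  have "((\<lambda>x::real. x) \<longlongrightarrow> 0) (at_right 0)" by (rule tendsto_ident_at)
  hence "((\<lambda>x. sqrt x) \<longlongrightarrow> sqrt 0) (at_right 0)" by (rule tendsto_real_sqrt)
  hence "((\<lambda>x. - 2 * sqrt x) \<longlongrightarrow> - 2 * sqrt 0) (at_right 0)" by (intro tendsto_intros)
  then show "((\<lambda>x. - 2 * sqrt x) \<longlongrightarrow> 0) (at_right (0::real))" by simp
  show "((\<lambda>x. 0) \<longlongrightarrow> (0::real)) (at_right 0)" by simp
qed

lemma xlogx_cont: "continuous_on {0..} xlogx"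
  unfolding continuous_on_def
proof
  fix x :: real assume x: "x \<in> {0..}"
  show "(xlogx \<longlongrightarrow> xlogx x) (at x within {0..})"
  proof (cases "x = 0")
    case True
    have "(xlogx \<longlongrightarrow> 0) (at 0 within {0<..})" using xlogx_lim by simp
    hence "(xlogx \<longlongrightarrow> 0) (at 0 within {0..})"
      by (simp add: at_within_Ici_at_right)
    then show ?thesis using True by (simp add: xlogx_def)
  next
    case False
    hence xp: "x > 0" using x by auto
    have "isCont (\<lambda>x. x * ln x) x" using xp by (intro continuous_intros) auto
    hence "((\<lambda>x. x * ln x) \<longlongrightarrow> x * ln x) (at x)" by (simp add: isCont_def)
    moreover have "eventually (\<lambda>y. y * ln y = xlogx y) (at x)"
    proof -
      have "eventually (\<lambda>y. y > 0) (at x)"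
        using order_tendstoD(1)[OF tendsto_ident_at xp] by simp
      then show ?thesis by (rule eventually_mono) (simp add: xlogx_def)
    qed
    ultimately have "(xlogx \<longlongrightarrow> x * ln x) (at x)"
      by (rule Lim_transform_eventually)
    hence "(xlogx \<longlongrightarrow> xlogx x) (at x)" using xp by (simp add: xlogx_def)
    then show ?thesis by (rule tendsto_within_subset) auto
  qed
qed


lemma xlogx_cont_comp [continuous_intros]:
  assumes "continuous_on S f" "\<And>x. x \<in> S \<Longrightarrow> 0 \<le> f x"
  shows "continuous_on S (\<lambda>x. xlogx (f x))"
  using continuous_on_compose2[OF xlogx_cont assms(1)] assms(2) by auto

lemma xlogx_le0: "0 \<le> x \<Longrightarrow> x \<le> (1::real) \<Longrightarrow> xlogx x \<le> 0"
  by (simp add: xlogx_def mult_nonneg_nonpos)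

lemma xlogx_tangent:
  assumes "0 \<le> x" "0 < m"
  shows "x * ln m + x - m \<le> xlogx x"
proof (cases "x = 0")
  case True then show ?thesis using assms by (simp add: xlogx_def)
next
  case False
  hence xp: "x > 0" using assms by auto
  have "ln (m / x) \<le> m / x - 1" using xp assms by (intro ln_le_minus_one) simp
  hence "ln m - ln x \<le> m / x - 1" using xp assms by (simp add: ln_div)
  hence "x * (ln m - ln x) \<le> x * (m / x - 1)" using xp by (intro mult_left_mono) auto
  also have "\<dots> = m - x" using xp by (simp add: field_simps)
  finally show ?thesis using xp by (simp add: xlogx_def algebra_simps)
qed

lemma xlogx_jensen:
  assumes "finite S" "S \<noteq> {}" "\<And>i. i \<in> S \<Longrightarrow> 0 \<le> q i"
  shows "real (card S) * xlogx (sum q S / real (card S)) \<le> (\<Sum>i\<in>S. xlogx (q i))"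
proof -
  define m where "m = sum q S / real (card S)"
  have c: "real (card S) > 0" using assms by (simp add: card_gt_0_iff)
  have sm: "sum q S = real (card S) * m" using c by (simp add: m_def)
  show ?thesis
  proof (cases "m = 0")
    case True
    hence "sum q S = 0" using sm by simp
    hence "\<forall>i\<in>S. q i = 0" using sum_nonneg_eq_0_iff[OF assms(1)] assms(3) by blast
    then show ?thesis using True by (simp add: m_def[symmetric] xlogx_def)
  next
    case False
    have "m \<ge> 0" unfolding m_def using assms by (intro divide_nonneg_nonneg sum_nonneg) auto
    hence mp: "m > 0" using False by simp
    have "(\<Sum>i\<in>S. q i * ln m + q i - m) \<le> (\<Sum>i\<in>S. xlogx (q i))"
      using xlogx_tangent[OF assms(3) mp] by (intro sum_mono) auto
    moreover have "(\<Sum>i\<in>S. q i * ln m + q i - m) = sum q S * ln m + sum q S - real (card S) * m"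
      by (simp add: sum.distrib sum_subtractf sum_distrib_right)
    moreover have "\<dots> = real (card S) * xlogx m" using sm mp by (simp add: xlogx_def)
    ultimately show ?thesis by (simp add: m_def)
  qed
qed

definition ent :: "nat \<Rightarrow> nat \<Rightarrow> real \<Rightarrow> real" where
  "ent N K t = - (real K * xlogx ((1 - t) / real K) + real (N - K) * xlogx (t / real (N - K)))"

definition tvp :: "nat \<Rightarrow> nat \<Rightarrow> real \<Rightarrow> real" where
  "tvp N K t = (1/2) * (real K * \<bar>(1 - t) / real K - 1 / real N\<bar>
      + real (N - K) * \<bar>t / real (N - K) - 1 / real N\<bar>)"

definition fK :: "nat \<Rightarrow> nat \<Rightarrow> real \<Rightarrow> real" where
  "fK N K t = (1 / ln (real N)) * ent N K t * (tvp N K t)^2"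

definition tl :: "nat \<Rightarrow> nat \<Rightarrow> real \<Rightarrow> nat \<Rightarrow> real" where
  "tl N K t i = (if i \<le> K then (1 - t) / real K else t / real (N - K))"

lemma sum_split_K:
  fixes g :: "nat \<Rightarrow> 'b::comm_monoid_add"
  assumes "K \<le> N"
  shows "(\<Sum>i=1..N. g i) = (\<Sum>i=1..K. g i) + (\<Sum>i=K+1..N. g i)"
proof -
  have "{1..N} = {1..K} \<union> {K+1..N}" using assms by auto
  moreover have "{1..K} \<inter> {K+1..N} = {}" by auto
  ultimately show ?thesis by (simp add: sum.union_disjoint)
qed

lemma sum_tl:
  assumes "K \<le> N"
  shows "(\<Sum>i=1..N. g (tl N K t i)) = real K * g ((1 - t) / real K) + real (N - K) * g (t / real (N - K))"
proof -
  have "(\<Sum>i=1..K. g (tl N K t i)) = (\<Sum>i=1..K. g ((1 - t) / real K))"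
    by (intro sum.cong) (auto simp: tl_def)
  moreover have "(\<Sum>i=K+1..N. g (tl N K t i)) = (\<Sum>i=K+1..N. g (t / real (N - K)))"
    by (intro sum.cong) (auto simp: tl_def)
  ultimately show ?thesis using sum_split_K[OF assms, of "\<lambda>i. g (tl N K t i)"] assms by (simp add: of_nat_diff)
qed

lemma tl_simplex:
  assumes "1 \<le> K" "K < N" "0 \<le> t" "t \<le> 1"
  shows "tl N K t \<in> simplex N"
proof -
  have "(\<Sum>i=1..N. tl N K t i) = 1"
    using sum_tl[of K N "\<lambda>x. x" t] assms by simp
  moreover have "\<forall>i\<in>{1..N}. 0 \<le> tl N K t i \<and> tl N K t i \<le> 1"
  proof
    fix i assume "i \<in> {1..N}"
    have k: "real K \<ge> 1" "real (N - K) \<ge> 1" using assms by auto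
    have "(1 - t) / real K \<le> 1 - t" using k assms mult_left_mono[of 1 "real K" "1-t"] by (simp add: divide_le_eq)
    moreover have "t / real (N - K) \<le> t" using k assms mult_left_mono[of 1 "real (N-K)" "t"] by (simp add: divide_le_eq)
    ultimately show "0 \<le> tl N K t i \<and> tl N K t i \<le> 1"
      using assms k by (auto simp: tl_def)
  qed
  ultimately show ?thesis by (simp add: simplex_def)
qed

lemma tl_C:
  assumes "K \<le> N"
  shows "C_TV N (tl N K t) = fK N K t"
  unfolding C_TV_def fK_def norm_entropy_def tv_uniform_def ent_def tvp_def
  using sum_tl[OF assms, of xlogx t] sum_tl[OF assms, of "\<lambda>x. \<bar>x - 1 / real N\<bar>" t]
  by simp

lemma C_TV_nonneg:
  assumes "N \<ge> 2" "q \<in> simplex N"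
  shows "0 \<le> C_TV N q"
proof -
  have "(\<Sum>i=1..N. xlogx (q i)) \<le> 0"
    using assms(2) by (intro sum_nonpos) (auto simp: simplex_def xlogx_le0)
  moreover have "ln (real N) > 0" using assms by simp
  ultimately show ?thesis unfolding C_TV_def norm_entropy_def by (simp add: divide_nonpos_pos mult_nonpos_nonneg)
qed

lemma fK_cont:
  assumes "1 \<le> K" "K < N"
  shows "continuous_on {0..1} (fK N K)"
  unfolding fK_def ent_def tvp_def using assms
  by (intro continuous_intros) auto


lemma main_bound:
  assumes N2: "N \<ge> 2" and q: "q \<in> simplex N"
  shows "\<exists>K\<in>{1..N-1}. \<exists>t\<in>{0..1}. C_TV N q \<le> fK N K t"
proof -
  define A where "A = {i\<in>{1..N}. 1 / real N \<le> q i}"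
  define B where "B = {i\<in>{1..N}. q i < 1 / real N}"
  have fin: "finite A" "finite B" by (auto simp: A_def B_def)
  have AB: "A \<union> B = {1..N}" "A \<inter> B = {}" by (auto simp: A_def B_def)
  have qnn: "\<And>i. i \<in> {1..N} \<Longrightarrow> 0 \<le> q i" and sq: "(\<Sum>i=1..N. q i) = 1"
    using q by (auto simp: simplex_def)
  have Np: "real N > 0" using N2 by simp
  have lnp: "ln (real N) > 0" using N2 by simp
  have split: "\<And>g::nat\<Rightarrow>real. (\<Sum>i=1..N. g i) = sum g A + sum g B"
  proof -
    fix g :: "nat \<Rightarrow> real"
    have "(\<Sum>i=1..N. g i) = sum g (A \<union> B)" using AB by simp
    also have "\<dots> = sum g A + sum g B" by (rule sum.union_disjoint[OF fin AB(2)])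
    finally show "(\<Sum>i=1..N. g i) = sum g A + sum g B" .
  qed
  have cardAB: "card A + card B = N"
  proof -
    have "card (A \<union> B) = card A + card B" by (rule card_Un_disjoint[OF fin AB(2)])
    then show ?thesis using AB by simp
  qed
  show ?thesis
  proof (cases "B = {}")
    case True
    have "(\<Sum>i=1..N. \<bar>q i - 1 / real N\<bar>) = (\<Sum>i=1..N. q i - 1 / real N)"
    proof (rule sum.cong[OF refl])
      fix i assume i: "i \<in> {1..N}"
      have "\<not> q i < 1 / real N" using i True unfolding B_def by blast
      hence "1 / real N \<le> q i" by linarith
      then show "\<bar>q i - 1 / real N\<bar> = q i - 1 / real N" by simp
    qed
    also have "\<dots> = 0" using sq Np by (simp add: sum_subtractf)
    finally have "C_TV N q = 0" by (simp add: C_TV_def tv_uniform_def)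
    moreover have "0 \<le> fK N 1 0"
      using C_TV_nonneg[OF N2 tl_simplex[of 1 N 0]] tl_C[of 1 N 0] N2 by simp
    ultimately show ?thesis using N2 by (intro bexI[of _ 1] bexI[of _ 0]) auto
  next
    case False
    have Ane: "A \<noteq> {}"
    proof
      assume "A = {}"
      hence BN: "B = {1..N}" using AB by auto
      have lt: "\<forall>i\<in>{1..N}. q i < 1 / real N"
      proof
        fix i :: nat assume "i \<in> {1..N}"
        hence "i \<in> B" using BN by simp
        then show "q i < 1 / real N" unfolding B_def by blast
      qed
      have "(\<Sum>i=1..N. q i) < (\<Sum>i=1..N. 1 / real N)"
        using N2 lt by (intro sum_strict_mono) auto
      then show False using sq Np by simp
    qed
    define K where "K = card B"
    define t where "t = sum q A"
    have K1: "K \<ge> 1" using False fin by (simp add: K_def card_gt_0_iff Suc_le_eq)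
    have cA: "card A \<ge> 1" using Ane fin by (simp add: card_gt_0_iff Suc_le_eq)
    have KN: "K \<le> N - 1" using cA cardAB K_def by simp
    have NK: "N - K = card A" using cardAB K_def by simp
    have sB: "sum q B = 1 - t" using split[of q] sq t_def by simp
    have t0: "t \<ge> 0" unfolding t_def using qnn by (intro sum_nonneg) (auto simp: A_def)
    have sB0: "sum q B \<ge> 0" using qnn by (intro sum_nonneg) (auto simp: B_def)
    have t1: "t \<le> 1" using sB sB0 by simp
    have sBle: "sum q B \<le> real K / real N"
    proof -
      have "sum q B \<le> (\<Sum>i\<in>B. 1 / real N)" by (intro sum_mono) (auto simp: B_def)
      then show ?thesis by (simp add: K_def)
    qed
    have sAge: "t \<ge> real (card A) / real N"
    proof -
      have "(\<Sum>i\<in>A. 1 / real N) \<le> sum q A" by (intro sum_mono) (auto simp: A_def)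
      then show ?thesis by (simp add: t_def)
    qed
    have qA: "\<And>i. i \<in> A \<Longrightarrow> 0 \<le> q i" using qnn unfolding A_def by blast
    have qB: "\<And>i. i \<in> B \<Longrightarrow> 0 \<le> q i" using qnn unfolding B_def by blast
    have Kp: "real K > 0" using K1 by simp
    have Ap: "real (card A) > 0" using cA by simp
    have tvq: "(\<Sum>i=1..N. \<bar>q i - 1 / real N\<bar>) = (t - real (card A) / real N) + (real K / real N - (1 - t))"
    proof -
      have "(\<Sum>i\<in>A. \<bar>q i - 1 / real N\<bar>) = (\<Sum>i\<in>A. q i - 1 / real N)"
        by (intro sum.cong) (auto simp: A_def)
      also have "\<dots> = t - real (card A) / real N" by (simp add: sum_subtractf t_def)
      finally have a: "(\<Sum>i\<in>A. \<bar>q i - 1 / real N\<bar>) = t - real (card A) / real N" .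
      have "(\<Sum>i\<in>B. \<bar>q i - 1 / real N\<bar>) = (\<Sum>i\<in>B. 1 / real N - q i)"
        by (intro sum.cong) (auto simp: B_def)
      also have "\<dots> = real K / real N - (1 - t)" using sB by (simp add: sum_subtractf K_def)
      finally have b: "(\<Sum>i\<in>B. \<bar>q i - 1 / real N\<bar>) = real K / real N - (1 - t)" .
      show ?thesis using split[of "\<lambda>i. \<bar>q i - 1 / real N\<bar>"] a b by simp
    qed
    have e1: "(1 - t) / real K \<le> 1 / real N"
      using sBle sB Kp Np by (simp add: divide_le_eq field_simps)
    have e2: "t / real (card A) \<ge> 1 / real N"
      using sAge Ap Np by (simp add: le_divide_eq field_simps)
    have "real K * \<bar>(1 - t) / real K - 1 / real N\<bar> = real K / real N - (1 - t)"
      using e1 Kp by (simp add: abs_if field_simps)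
    moreover have "real (card A) * \<bar>t / real (card A) - 1 / real N\<bar> = t - real (card A) / real N"
      using e2 Ap by (simp add: abs_if field_simps)
    ultimately have tveq: "tv_uniform N q = tvp N K t"
      unfolding tv_uniform_def tvp_def using tvq NK by simp
    have "real (card A) * xlogx (t / real (card A)) \<le> (\<Sum>i\<in>A. xlogx (q i))"
      using xlogx_jensen[OF fin(1) Ane, of q] qA by (simp add: t_def)
    moreover have "real K * xlogx ((1 - t) / real K) \<le> (\<Sum>i\<in>B. xlogx (q i))"
      using xlogx_jensen[OF fin(2) False, of q] qB sB by (simp add: K_def)
    ultimately have "- (\<Sum>i=1..N. xlogx (q i)) \<le> ent N K t"
      unfolding ent_def using split[of "\<lambda>i. xlogx (q i)"] NK by simp
    hence "norm_entropy N q \<le> (1 / ln (real N)) * ent N K t"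
      unfolding norm_entropy_def using lnp by (intro mult_left_mono) auto
    hence "C_TV N q \<le> fK N K t"
      unfolding C_TV_def fK_def tveq by (intro mult_right_mono) auto
    moreover have "K \<in> {1..N-1}" "t \<in> {0..1}" using K1 KN t0 t1 by auto
    ultimately show ?thesis by blast
  qed
qed

theorem lemma4:
  fixes N :: nat
  assumes "N \<ge> 2"
  shows "\<exists>p\<in>simplex N. (\<forall>q\<in>simplex N. C_TV N q \<le> C_TV N p) \<and>
    (\<exists>\<sigma> K pmax. \<sigma> permutes {1..N} \<and> K \<in> {1..N-1} \<and> 0 \<le> pmax \<and> pmax \<le> 1 \<and>
       (\<forall>i\<in>{1..K}. p (\<sigma> i) = (1 - pmax) / real K) \<and>
       (\<forall>i\<in>{K+1..N}. p (\<sigma> i) = pmax / real (N - K)))"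
proof -
  have "\<forall>K\<in>{1..N-1}. \<exists>t. t \<in> {0..1} \<and> (\<forall>s\<in>{0..1}. fK N K s \<le> fK N K t)"
  proof
    fix K assume K: "K \<in> {1..N-1}"
    have "continuous_on {0..1} (fK N K)" using K assms by (intro fK_cont) auto
    from continuous_attains_sup[OF compact_Icc _ this]
    show "\<exists>t. t \<in> {0..1} \<and> (\<forall>s\<in>{0..1}. fK N K s \<le> fK N K t)" by auto
  qed
  then obtain T where T: "\<And>K. K \<in> {1..N-1} \<Longrightarrow> T K \<in> {0..1} \<and> (\<forall>s\<in>{0..1}. fK N K s \<le> fK N K (T K))"
    by metis
  define g where "g K = fK N K (T K)" for K
  define M where "M = Max (g ` {1..N-1})"
  have ne: "{1..N-1} \<noteq> {}" using assms by auto
  have "M \<in> g ` {1..N-1}" unfolding M_def using ne by (intro Max_in) auto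
  then obtain K0 where K0: "K0 \<in> {1..N-1}" and gK0: "g K0 = M" by auto
  have Mge: "\<And>K. K \<in> {1..N-1} \<Longrightarrow> g K \<le> M" unfolding M_def by (intro Max_ge) auto
  define p where "p = tl N K0 (T K0)"
  have T0: "0 \<le> T K0" "T K0 \<le> 1" using T[OF K0] by auto
  have K0b: "1 \<le> K0" "K0 < N" using K0 assms by auto
  have pS: "p \<in> simplex N" unfolding p_def using tl_simplex[OF K0b T0] .
  have Cp: "C_TV N p = M" unfolding p_def using tl_C[of K0 N] K0b gK0 g_def by simp
  show ?thesis
  proof (intro bexI[OF _ pS] conjI ballI)
    fix q assume "q \<in> simplex N"
    then obtain K t where K: "K \<in> {1..N-1}" and t: "t \<in> {0..1}" and Cq: "C_TV N q \<le> fK N K t"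
      using main_bound[OF assms] by blast
    have "fK N K t \<le> g K" using T[OF K] t by (simp add: g_def)
    then show "C_TV N q \<le> C_TV N p" using Cq Mge[OF K] Cp by simp
  next
    show "\<exists>\<sigma> K pmax. \<sigma> permutes {1..N} \<and> K \<in> {1..N-1} \<and> 0 \<le> pmax \<and> pmax \<le> 1 \<and>
       (\<forall>i\<in>{1..K}. p (\<sigma> i) = (1 - pmax) / real K) \<and>
       (\<forall>i\<in>{K+1..N}. p (\<sigma> i) = pmax / real (N - K))"
      by (intro exI[of _ id] exI[of _ K0] exI[of _ "T K0"])
        (use K0 T0 in \<open>auto simp: p_def tl_def permutes_id\<close>)
  qed
qed

end
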